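(* If $T\in L_{aut}(\mathcal B)$ is a shifted hyperbolic operator, then $\overline{B(T)}$ is an infinite-dimensional closed subspace of $\mathcal B$ and it coincides with the shifted subspace $\Sigma$.
   Context: $\mathcal B$ is a Banach space. $T$ is generalized hyperbolic if there is a decomposition $\mathcal B=E^-\oplus E^+$ into complementary closed subspaces with $T(E^+)\subset E^+$, $T^{-1}(E^-)\subset E^-$, and $T|_{E^+}$, $T^{-1}|_{E^-}$ uniform contractions. $T$ is shifted hyperbolic if it is generalized hyperbolic and the transition subspace $E_0:=E^-\cap T^{-1}(E^+)$ is nonzero. The shifted subspace $\Sigma$ is the smallest closed subspace containing $E_0$ that is invariant under $T$ and $T^{-1}$ (the closure of the span of $\bigcup_{n\in\mathbb Z}T^n(E_0)$). The bounded set $B(T)$ is the set of $x$ for which there exist $K>0$ and strictly increasing sequences of positive integers $(k_n),(m_n)$ with $|T^{k_n}x|<K$ and $|T^{-m_n}x|<K$. *)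

theory Defs
  imports "HOL-Analysis.Analysis"
begin

definition L_aut :: "('a::banach \<Rightarrow> 'a) set" where
  "L_aut = {T. bounded_linear T \<and> bij T \<and> bounded_linear (inv T)}"

definition zpow :: "('a \<Rightarrow> 'a) \<Rightarrow> int \<Rightarrow> 'a \<Rightarrow> 'a" where
  "zpow T n = (if 0 \<le> n then T ^^ nat n else (inv T) ^^ nat (- n))"

definition uniform_contraction_on :: "'a::real_normed_vector set \<Rightarrow> ('a \<Rightarrow> 'a) \<Rightarrow> bool" where
  "uniform_contraction_on S f \<longleftrightarrow>
     (\<exists>C t. C > 0 \<and> 0 < t \<and> t < 1 \<and>
        (\<forall>x\<in>S. \<forall>n::nat. norm ((f ^^ n) x) \<le> C * t ^ n * norm x))"

definition generalized_hyperbolic_split :: "('a::banach \<Rightarrow> 'a) \<Rightarrow> 'a set \<Rightarrow> 'a set \<Rightarrow> bool" where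
  "generalized_hyperbolic_split T Em Ep \<longleftrightarrow>
     subspace Em \<and> subspace Ep \<and> closed Em \<and> closed Ep \<and>
     Em \<inter> Ep = {0} \<and> {x + y | x y. x \<in> Em \<and> y \<in> Ep} = UNIV \<and>
     T ` Ep \<subseteq> Ep \<and> inv T ` Em \<subseteq> Em \<and>
     uniform_contraction_on Ep T \<and> uniform_contraction_on Em (inv T)"

definition generalized_hyperbolic :: "('a::banach \<Rightarrow> 'a) \<Rightarrow> bool" where
  "generalized_hyperbolic T \<longleftrightarrow> (\<exists>Em Ep. generalized_hyperbolic_split T Em Ep)"

definition transition_subspace :: "('a::banach \<Rightarrow> 'a) \<Rightarrow> 'a set \<Rightarrow> 'a set \<Rightarrow> 'a set" where
  "transition_subspace T Em Ep = Em \<inter> inv T ` Ep"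

definition shifted_hyperbolic_split :: "('a::banach \<Rightarrow> 'a) \<Rightarrow> 'a set \<Rightarrow> 'a set \<Rightarrow> bool" where
  "shifted_hyperbolic_split T Em Ep \<longleftrightarrow>
     generalized_hyperbolic_split T Em Ep \<and> transition_subspace T Em Ep \<noteq> {0}"

definition shifted_subspace :: "('a::banach \<Rightarrow> 'a) \<Rightarrow> 'a set \<Rightarrow> 'a set \<Rightarrow> 'a set" where
  "shifted_subspace T Em Ep =
     closure (span (\<Union>n::int. zpow T n ` transition_subspace T Em Ep))"

definition bounded_set :: "('a::banach \<Rightarrow> 'a) \<Rightarrow> 'a set" where
  "bounded_set T = {x. \<exists>K>0. \<exists>k m :: nat \<Rightarrow> nat.
      strict_mono k \<and> strict_mono m \<and> (\<forall>n. 0 < k n \<and> 0 < m n) \<and>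
      (\<forall>n. norm ((T ^^ k n) x) < K \<and> norm ((inv T ^^ m n) x) < K)}"

end

theory Submission
  imports Defs
begin


lemma proj_approx:
  fixes Em Ep :: "'a::banach set"
  assumes sEm: "subspace Em" and sEp: "subspace Ep"
    and dec: "\<And>y. \<exists>a\<in>Em. y - a \<in> Ep"
  shows "\<exists>M>0. \<forall>y e. e > 0 \<longrightarrow> (\<exists>w a. norm (y - w) < e \<and> a \<in> Em \<and> w - a \<in> Ep \<and> norm a \<le> M * norm y)"
proof -
  define A where "A n = {y. \<exists>a\<in>Em. y - a \<in> Ep \<and> norm a \<le> real n}" for n :: nat
  have UA: "\<Union>(range (\<lambda>n. closure (A n))) = UNIV"
  proof -
    { fix y :: 'a
      obtain a where a: "a \<in> Em" "y - a \<in> Ep" using dec by blast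
      obtain n :: nat where "norm a \<le> real n" using real_arch_simple by blast
      then have "y \<in> A n" using a A_def by blast
      then have "y \<in> \<Union>(range (\<lambda>n. closure (A n)))" using closure_subset by blast }
    then show ?thesis by blast
  qed
  have "\<exists>n. interior (closure (A n)) \<noteq> {}"
  proof (rule ccontr)
    assume "\<not> ?thesis"
    then have "euclidean interior_of \<Union>(range (\<lambda>n. closure (A n))) = {}"
      by (intro Baire_category_alt) (auto simp: completely_metrizable_space_euclidean closed_closedin[symmetric])
    then show False using UA by simp
  qed
  then obtain n y0 where "y0 \<in> interior (closure (A n))" by blast
  then obtain r where r: "r > 0" "ball y0 r \<subseteq> closure (A n)"
    using open_contains_ball by (metis interior_subset open_interior subset_trans)
  have small: "\<exists>w a. norm (z - w) < e \<and> a \<in> Em \<and> w - a \<in> Ep \<and> norm a \<le> 2 * real n"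
    if z: "norm z < r" and e: "e > 0" for z e
  proof -
    have "y0 + z \<in> closure (A n)" using r z by (auto simp: dist_norm)
    then obtain p where p: "p \<in> A n" "dist p (y0 + z) < e/2"
      using e closure_approachable by (metis half_gt_zero)
    have "y0 \<in> closure (A n)" using r by auto
    then obtain q where q: "q \<in> A n" "dist q y0 < e/2"
      using e closure_approachable by (metis half_gt_zero)
    obtain ap where ap: "ap \<in> Em" "p - ap \<in> Ep" "norm ap \<le> n" using p A_def by blast
    obtain aq where aq: "aq \<in> Em" "q - aq \<in> Ep" "norm aq \<le> n" using q A_def by blast
    have "ap - aq \<in> Em" using ap aq sEm by (simp add: subspace_diff)
    moreover have "(p - q) - (ap - aq) \<in> Ep"
    proof -
      have "(p - ap) - (q - aq) \<in> Ep" using ap aq sEp by (simp add: subspace_diff)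
      moreover have "(p - ap) - (q - aq) = (p - q) - (ap - aq)" by (simp add: algebra_simps)
      ultimately show ?thesis by simp
    qed
    moreover have "norm (ap - aq) \<le> 2 * real n"
      using ap aq norm_triangle_ineq4[of ap aq] by linarith
    moreover have "norm (z - (p - q)) < e"
    proof -
      have "z - (p - q) = ((y0 + z) - p) + (q - y0)" by (simp add: algebra_simps)
      then have "norm (z - (p - q)) \<le> norm ((y0 + z) - p) + norm (q - y0)"
        by (metis norm_triangle_ineq)
      moreover have "norm ((y0 + z) - p) < e/2" using p by (simp add: dist_norm norm_minus_commute)
      moreover have "norm (q - y0) < e/2" using q by (simp add: dist_norm)
      ultimately show ?thesis by linarith
    qed
    ultimately show ?thesis by blast
  qed
  define M where "M = 4 * real n / r + 1"
  have "4 * real n / r \<ge> 0" using r by simp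
  then have M: "M > 0" by (simp add: M_def)
  have "\<exists>w a. norm (y - w) < e \<and> a \<in> Em \<and> w - a \<in> Ep \<and> norm a \<le> M * norm y"
    if e: "e > 0" for y e
  proof (cases "y = 0")
    case True
    then show ?thesis using e sEm sEp by (intro exI[of _ 0]) (auto simp: subspace_0)
  next
    case False
    define c where "c = r / (2 * norm y)"
    have c: "c > 0" using False r by (simp add: c_def)
    have "norm (c *\<^sub>R y) < r" using False r by (simp add: c_def)
    then obtain w a where wa: "norm (c *\<^sub>R y - w) < c * e" "a \<in> Em" "w - a \<in> Ep" "norm a \<le> 2 * real n"
      using small c e by (meson mult_pos_pos)
    have "norm (y - w /\<^sub>R c) < e"
    proof -
      have "y - w /\<^sub>R c = (c *\<^sub>R y - w) /\<^sub>R c" using c by (simp add: algebra_simps)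
      then have "norm (y - w /\<^sub>R c) = norm (c *\<^sub>R y - w) / c" using c by (simp add: divide_inverse_commute)
      also have "\<dots> < e" using wa(1) c by (simp add: divide_less_eq mult.commute)
      finally show ?thesis .
    qed
    moreover have "a /\<^sub>R c \<in> Em" using wa sEm by (simp add: subspace_scale)
    moreover have "w /\<^sub>R c - a /\<^sub>R c \<in> Ep"
      using wa sEp subspace_scale[OF sEp, of "w - a" "inverse c"] by (simp add: algebra_simps)
    moreover have "norm (a /\<^sub>R c) \<le> M * norm y"
    proof -
      have "norm (a /\<^sub>R c) = norm a / c" using c by (simp add: divide_inverse_commute)
      also have "\<dots> \<le> 2 * real n / c" using wa(4) c by (simp add: divide_right_mono)
      also have "\<dots> = 4 * real n / r * norm y" using False r by (simp add: c_def field_simps)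
      also have "\<dots> \<le> M * norm y" unfolding M_def by (simp add: distrib_right)
      finally show ?thesis .
    qed
    ultimately show ?thesis by blast
  qed
  then show ?thesis using M by blast
qed



lemma proj_bounded:
  fixes Em Ep :: "'a::banach set"
  assumes sEm: "subspace Em" and sEp: "subspace Ep" and cEm: "closed Em" and cEp: "closed Ep"
    and dec: "\<And>y. \<exists>a\<in>Em. y - a \<in> Ep"
  shows "\<exists>M>0. \<forall>y. \<exists>a\<in>Em. y - a \<in> Ep \<and> norm a \<le> M * norm y"
proof -
  obtain M where M: "M > 0" and appr: "\<And>y e. e > 0 \<Longrightarrow> \<exists>w a. norm (y - w) < e \<and> a \<in> Em \<and> w - a \<in> Ep \<and> norm a \<le> M * norm y"
    using proj_approx[OF sEm sEp dec] by blast
  have "\<exists>a\<in>Em. y - a \<in> Ep \<and> norm a \<le> (2 * M) * norm y" for y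
  proof (cases "y = 0")
    case True
    then show ?thesis using sEm sEp by (intro bexI[of _ 0]) (auto simp: subspace_0)
  next
    case False
    then have ny: "norm y > 0" by simp
    have "\<forall>q::'a\<times>nat. \<exists>p. norm (fst q - fst p) < norm y * (1/2) ^ Suc (snd q) \<and> snd p \<in> Em \<and> fst p - snd p \<in> Ep \<and> norm (snd p) \<le> M * norm (fst q)"
    proof
      fix q :: "'a\<times>nat"
      have "norm y * (1/2) ^ Suc (snd q) > 0" using ny by simp
      from appr[OF this, of "fst q"] obtain w a where
        "norm (fst q - w) < norm y * (1/2) ^ Suc (snd q)" "a \<in> Em" "w - a \<in> Ep" "norm a \<le> M * norm (fst q)"
        by blast
      then show "\<exists>p. norm (fst q - fst p) < norm y * (1/2) ^ Suc (snd q) \<and> snd p \<in> Em \<and> fst p - snd p \<in> Ep \<and> norm (snd p) \<le> M * norm (fst q)"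
        by (intro exI[of _ "(w,a)"]) simp
    qed
    from choice[OF this] obtain F0 where F0: "\<forall>q. norm (fst q - fst (F0 q)) < norm y * (1/2) ^ Suc (snd q) \<and> snd (F0 q) \<in> Em \<and> fst (F0 q) - snd (F0 q) \<in> Ep \<and> norm (snd (F0 q)) \<le> M * norm (fst q)"
      by blast
    define F where "F r k = F0 (r, k)" for r k
    have F: "\<And>r k. norm (r - fst (F r k)) < norm y * (1/2) ^ Suc k \<and> snd (F r k) \<in> Em \<and> fst (F r k) - snd (F r k) \<in> Ep \<and> norm (snd (F r k)) \<le> M * norm r"
      using F0 unfolding F_def by (metis fst_conv snd_conv)
    define R where "R = rec_nat y (\<lambda>k r. r - fst (F r k))"
    have R0: "R 0 = y" and RS: "\<And>k. R (Suc k) = R k - fst (F (R k) k)" by (simp_all add: R_def)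
    define w where "w k = fst (F (R k) k)" for k
    define b where "b k = snd (F (R k) k)" for k
    have Rb: "norm (R k) \<le> norm y * (1/2) ^ k" for k
    proof (cases k)
      case 0 then show ?thesis by (simp add: R0)
    next
      case (Suc j)
      then show ?thesis using F[of "R j" j] RS[of j] by simp
    qed
    define g where "g k = M * norm y * (1/2::real) ^ k" for k
    have bEm: "b k \<in> Em" and wbEp: "w k - b k \<in> Ep" and bn: "norm (b k) \<le> g k" for k
    proof -
      show "b k \<in> Em" "w k - b k \<in> Ep" using F[of "R k" k] by (auto simp: b_def w_def)
      have "norm (b k) \<le> M * norm (R k)" using F[of "R k" k] by (simp add: b_def)
      also have "\<dots> \<le> M * (norm y * (1/2) ^ k)" by (rule mult_left_mono[OF Rb]) (use M in simp)
      finally show "norm (b k) \<le> g k" by (simp add: g_def mult.assoc)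
    qed
    have gs: "summable g" unfolding g_def
      by (intro summable_mult summable_geometric) simp
    have gsum: "suminf g = 2 * M * norm y"
    proof -
      have "suminf g = M * norm y * (\<Sum>k. (1/2::real) ^ k)" unfolding g_def
        by (intro suminf_mult summable_geometric) simp
      also have "(\<Sum>k. (1/2::real) ^ k) = 2" using suminf_geometric[of "1/2::real"] by simp
      finally show ?thesis by simp
    qed
    have bs: "summable b" by (rule summable_comparison_test'[OF gs bn])
    have bns: "summable (\<lambda>k. norm (b k))" by (rule summable_comparison_test'[OF gs]) (use bn in simp)
    define a where "a = suminf b"
    have blim: "(\<lambda>n. \<Sum>k<n. b k) \<longlonglongrightarrow> a" unfolding a_def using bs by (rule summable_LIMSEQ)
    have aEm: "a \<in> Em"
      by (rule closed_sequentially[OF cEm _ blim]) (use bEm sEm in \<open>simp add: subspace_sum\<close>)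
    have an: "norm a \<le> 2 * M * norm y"
    proof -
      have "norm a \<le> (\<Sum>k. norm (b k))" unfolding a_def by (rule summable_norm[OF bns])
      also have "\<dots> \<le> suminf g" by (rule suminf_le[OF bn bns gs])
      finally show ?thesis using gsum by simp
    qed
    have wsum: "(\<Sum>k<n. w k) = y - R n" for n
      by (induction n) (simp_all add: R0 RS w_def)
    have R0lim: "R \<longlonglongrightarrow> 0"
    proof (rule Lim_null_comparison)
      show "\<forall>\<^sub>F n in sequentially. norm (R n) \<le> norm y * (1/2) ^ n" using Rb by simp
      show "(\<lambda>n. norm y * (1/2::real) ^ n) \<longlonglongrightarrow> 0"
        by (intro tendsto_mult_right_zero LIMSEQ_realpow_zero) simp_all
    qed
    have lim2: "(\<lambda>n. \<Sum>k<n. (w k - b k)) \<longlonglongrightarrow> (y - 0) - a"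
    proof -
      have "(\<lambda>n. (y - R n) - (\<Sum>k<n. b k)) \<longlonglongrightarrow> (y - 0) - a"
        by (intro tendsto_diff tendsto_const R0lim blim)
      moreover have "(\<Sum>k<n. (w k - b k)) = (y - R n) - (\<Sum>k<n. b k)" for n
        by (simp add: sum_subtractf wsum)
      ultimately show ?thesis by simp
    qed
    have inEp: "(\<Sum>k<n. (w k - b k)) \<in> Ep" for n
      using wbEp sEp by (simp add: subspace_sum)
    have "y - 0 - a \<in> Ep"
      by (rule closed_sequentially[OF cEp inEp lim2])
    then have "y - a \<in> Ep" by simp
    then show ?thesis using aEm an by blast
  qed
  then show ?thesis using M by (intro exI[of _ "2*M"]) auto
qed


lemma subspace_closure_lemma:
  fixes X :: "'a::real_normed_vector set"
  assumes "subspace X" shows "subspace (closure X)"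
proof -
  have "0 \<in> closure X" using assms closure_subset[of X] subspace_0[of X] by auto
  moreover have "x + y \<in> closure X" if hx: "x \<in> closure X" and hy: "y \<in> closure X" for x y
  proof -
    obtain f where f: "\<And>n. f n \<in> X" "f \<longlonglongrightarrow> x" using hx unfolding closure_sequential by blast
    obtain g where g: "\<And>n. g n \<in> X" "g \<longlonglongrightarrow> y" using hy unfolding closure_sequential by blast
    have "(\<lambda>n. f n + g n) \<longlonglongrightarrow> x + y" by (intro tendsto_add f g)
    moreover have "f n + g n \<in> X" for n using f g assms by (simp add: subspace_add)
    ultimately show ?thesis unfolding closure_sequential by (intro exI[of _ "\<lambda>n. f n + g n"]) auto
  qed
  moreover have "c *\<^sub>R x \<in> closure X" if hx: "x \<in> closure X" for c x
  proof -
    obtain f where f: "\<And>n. f n \<in> X" "f \<longlonglongrightarrow> x" using hx unfolding closure_sequential by blast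
    have "(\<lambda>n. c *\<^sub>R f n) \<longlonglongrightarrow> c *\<^sub>R x" by (intro tendsto_scaleR tendsto_const f)
    moreover have "c *\<^sub>R f n \<in> X" for n using f assms by (simp add: subspace_scale)
    ultimately show ?thesis unfolding closure_sequential by (intro exI[of _ "\<lambda>n. c *\<^sub>R f n"]) auto
  qed
  ultimately show ?thesis by (simp add: subspace_def)
qed

locale shyp =
  fixes T :: "'a::banach \<Rightarrow> 'a" and Em Ep :: "'a set"
  assumes aut: "T \<in> L_aut" and sh: "shifted_hyperbolic_split T Em Ep"
begin

lemma blT: "bounded_linear T" and blI: "bounded_linear (inv T)" and bijT: "bij T"
  using aut by (auto simp: L_aut_def)

lemma linT: "linear T" and linI: "linear (inv T)"
  using blT blI bounded_linear.linear by auto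

lemma TI [simp]: "T (inv T x) = x" using bijT by (simp add: bij_is_surj surj_f_inv_f)
lemma IT [simp]: "inv T (T x) = x" using bijT by (simp add: bij_is_inj inv_f_f)

lemma sEm: "subspace Em" and sEp: "subspace Ep" and cEm: "closed Em" and cEp: "closed Ep"
  and EmEp: "Em \<inter> Ep = {0}" and TEp: "\<And>x. x \<in> Ep \<Longrightarrow> T x \<in> Ep"
  and IEm: "\<And>x. x \<in> Em \<Longrightarrow> inv T x \<in> Em"
  and ucp: "uniform_contraction_on Ep T" and ucm: "uniform_contraction_on Em (inv T)"
  and E0nz: "transition_subspace T Em Ep \<noteq> {0}"
  using sh by (auto simp: shifted_hyperbolic_split_def generalized_hyperbolic_split_def)

lemma dec: "\<exists>a\<in>Em. y - a \<in> Ep"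
proof -
  have "y \<in> {x + y | x y. x \<in> Em \<and> y \<in> Ep}"
    using sh by (simp add: shifted_hyperbolic_split_def generalized_hyperbolic_split_def)
  then obtain a b where "y = a + b" "a \<in> Em" "b \<in> Ep" by blast
  then show ?thesis by (intro bexI[of _ a]) auto
qed

lemma EmEp0: "x \<in> Em \<Longrightarrow> x \<in> Ep \<Longrightarrow> x = 0" using EmEp by blast

definition E0 where "E0 = transition_subspace T Em Ep"

lemma E0_iff: "e \<in> E0 \<longleftrightarrow> e \<in> Em \<and> T e \<in> Ep"
proof
  assume "e \<in> E0"
  then obtain p where "e \<in> Em" "p \<in> Ep" "e = inv T p" unfolding E0_def transition_subspace_def by blast
  then show "e \<in> Em \<and> T e \<in> Ep" by simp
next
  assume h: "e \<in> Em \<and> T e \<in> Ep"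
  then have "e = inv T (T e)" by simp
  then have "e \<in> inv T ` Ep" using h by blast
  then show "e \<in> E0" using h unfolding E0_def transition_subspace_def by blast
qed

lemma funpow_TI: "(T ^^ k) ((inv T ^^ k) x) = x"
  by (induction k arbitrary: x) (simp_all add: funpow_swap1[of "inv T"])

lemma funpow_IT: "(inv T ^^ k) ((T ^^ k) x) = x"
  by (induction k arbitrary: x) (simp_all add: funpow_swap1[of T])

lemma linTk: "linear (T ^^ k)"
proof (induction k)
  case 0 show ?case by (simp only: funpow.simps(1) linear_id)
next
  case (Suc k)
  have "linear (T \<circ> (T ^^ k))" by (rule linear_compose[OF Suc linT])
  then show ?case by (simp only: funpow.simps(2))
qed

lemma linIk: "linear (inv T ^^ k)"
proof (induction k)
  case 0 show ?case by (simp only: funpow.simps(1) linear_id)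
next
  case (Suc k)
  have "linear (inv T \<circ> (inv T ^^ k))" by (rule linear_compose[OF Suc linI])
  then show ?case by (simp only: funpow.simps(2))
qed

lemma TkEp: "x \<in> Ep \<Longrightarrow> (T ^^ k) x \<in> Ep"
  by (induction k) (simp_all add: TEp)

lemma IkEm: "x \<in> Em \<Longrightarrow> (inv T ^^ k) x \<in> Em"
  by (induction k) (simp_all add: IEm)

lemma zpow_nat: "zpow T (int k) = T ^^ k" by (simp add: zpow_def)
lemma zpow_neg: "zpow T (- int k) = inv T ^^ k"
proof -
  have "nat (- (- int k)) = k" by simp
  then show ?thesis unfolding zpow_def by auto
qed

lemma T_zpow: "T (zpow T n x) = zpow T (n + 1) x"
proof (cases "n \<ge> 0")
  case True
  then have "nat (n + 1) = Suc (nat n)" by simp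
  then show ?thesis using True by (simp add: zpow_def)
next
  case False
  then obtain m where m: "nat (- n) = Suc m" "nat (- (n + 1)) = m" by (intro that[of "nat (- n - 1)"]) auto
  show ?thesis
  proof (cases "n + 1 \<ge> 0")
    case True
    then have "m = 0" using m by simp
    then show ?thesis using False True m by (simp add: zpow_def)
  next
    case False2: False
    then show ?thesis using False m by (simp add: zpow_def)
  qed
qed

lemma I_zpow: "inv T (zpow T n x) = zpow T (n - 1) x"
proof -
  have "zpow T n x = T (zpow T (n - 1) x)" using T_zpow[of "n - 1" x] by simp
  then show ?thesis by simp
qed

definition S where "S = span (\<Union>n::int. zpow T n ` E0)"

lemma shifted_eq: "shifted_subspace T Em Ep = closure S"
  by (simp add: shifted_subspace_def S_def E0_def)

lemma subS: "subspace S" unfolding S_def by (rule subspace_span)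

lemma E0S: "e \<in> E0 \<Longrightarrow> e \<in> S"
proof -
  assume "e \<in> E0"
  then have "zpow T 0 e \<in> (\<Union>n::int. zpow T n ` E0)" by blast
  then show "e \<in> S" unfolding S_def by (simp add: zpow_def span_base)
qed

lemma zpowS: "e \<in> E0 \<Longrightarrow> zpow T n e \<in> S"
  unfolding S_def by (rule span_base) blast

lemma TS: "x \<in> S \<Longrightarrow> T x \<in> S"
proof -
  let ?X = "\<Union>n::int. zpow T n ` E0"
  have "T ` ?X \<subseteq> ?X" using T_zpow by blast
  then have "span (T ` ?X) \<subseteq> span ?X" by (rule span_mono)
  then have "T ` S \<subseteq> S" unfolding S_def using linear_span_image[OF linT] by simp
  then show "x \<in> S \<Longrightarrow> T x \<in> S" by blast
qed

lemma IS: "x \<in> S \<Longrightarrow> inv T x \<in> S"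
proof -
  let ?X = "\<Union>n::int. zpow T n ` E0"
  have "inv T ` ?X \<subseteq> ?X" using I_zpow by blast
  then have "span (inv T ` ?X) \<subseteq> span ?X" by (rule span_mono)
  then have "inv T ` S \<subseteq> S" unfolding S_def using linear_span_image[OF linI] by simp
  then show "x \<in> S \<Longrightarrow> inv T x \<in> S" by blast
qed

lemma TkS: "x \<in> S \<Longrightarrow> (T ^^ k) x \<in> S"
  by (induction k) (simp_all add: TS)

lemma L2: "w \<in> Em \<Longrightarrow> (T ^^ k) w \<in> Ep \<Longrightarrow> w \<in> S"
proof (induction k arbitrary: w)
  case 0
  then have "w = 0" using EmEp0 by simp
  then show ?case using subS by (simp add: subspace_0)
next
  case (Suc k)
  obtain a where a: "a \<in> Em" "T w - a \<in> Ep" using dec by blast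
  define b where "b = T w - a"
  have b: "b \<in> Ep" using a b_def by simp
  have h1: "(T ^^ k) (T w) \<in> Ep" using Suc.prems by (simp add: funpow_Suc_right del: funpow.simps)
  have "T w = a + b" using b_def by simp
  then have h2: "(T ^^ k) (T w) = (T ^^ k) a + (T ^^ k) b" using linear_add[OF linTk] by simp
  have "(T ^^ k) a = (T ^^ k) (T w) - (T ^^ k) b" using h2 by simp
  then have "(T ^^ k) a \<in> Ep" using TkEp[OF b, of k] h1 sEp by (simp add: subspace_diff)
  then have aS: "a \<in> S" using Suc.IH a by blast
  have "inv T b = w - inv T a" using linear_diff[OF linI] b_def by simp
  then have "inv T b \<in> Em" using Suc.prems IEm[OF a(1)] sEm by (simp add: subspace_diff)
  moreover have "T (inv T b) \<in> Ep" using b by simp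
  ultimately have "inv T b \<in> S" using E0S E0_iff by blast
  moreover have "w = inv T a + inv T b" using \<open>inv T b = w - inv T a\<close> by simp
  ultimately show ?case using IS[OF aS] subS by (simp add: subspace_add)
qed

end


context shyp begin

lemma contrP: obtains C t where "C > 0" "0 < t" "t < 1"
  "\<And>x n. x \<in> Ep \<Longrightarrow> norm ((T ^^ n) x) \<le> C * t ^ n * norm x"
proof -
  from ucp obtain C t where "C > 0" "0 < t" "t < 1" "\<forall>x\<in>Ep. \<forall>n. norm ((T ^^ n) x) \<le> C * t ^ n * norm x"
    unfolding uniform_contraction_on_def by blast
  then show thesis using that by blast
qed

lemma contrM: obtains C t where "C > 0" "0 < t" "t < 1"
  "\<And>x n. x \<in> Em \<Longrightarrow> norm ((inv T ^^ n) x) \<le> C * t ^ n * norm x"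
proof -
  from ucm obtain C t where "C > 0" "0 < t" "t < 1" "\<forall>x\<in>Em. \<forall>n. norm ((inv T ^^ n) x) \<le> C * t ^ n * norm x"
    unfolding uniform_contraction_on_def by blast
  then show thesis using that by blast
qed

definition FF where "FF = {x. (\<lambda>j. (T ^^ j) x) \<longlonglongrightarrow> 0}"
definition GG where "GG = {x. (\<lambda>j. (inv T ^^ j) x) \<longlonglongrightarrow> 0}"

lemma subFF: "subspace FF"
  unfolding subspace_def FF_def
  using linear_0[OF linTk] linear_add[OF linTk] linear_scale[OF linTk]
  by (auto intro: tendsto_add_zero tendsto_scaleR[THEN tendsto_eq_rhs])

lemma subGG: "subspace GG"
  unfolding subspace_def GG_def
  using linear_0[OF linIk] linear_add[OF linIk] linear_scale[OF linIk]
  by (auto intro: tendsto_add_zero tendsto_scaleR[THEN tendsto_eq_rhs])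

lemma EpFF: "x \<in> Ep \<Longrightarrow> x \<in> FF"
proof -
  assume x: "x \<in> Ep"
  obtain C t where Ct: "C > 0" "0 < t" "t < 1"
    "\<And>x n. x \<in> Ep \<Longrightarrow> norm ((T ^^ n) x) \<le> C * t ^ n * norm x" using contrP by blast
  have "(\<lambda>j. (T ^^ j) x) \<longlonglongrightarrow> 0"
  proof (rule Lim_null_comparison)
    show "\<forall>\<^sub>F n in sequentially. norm ((T ^^ n) x) \<le> C * t ^ n * norm x" using Ct x by simp
    have "(\<lambda>n. t ^ n) \<longlonglongrightarrow> 0" using Ct by (intro LIMSEQ_realpow_zero) simp_all
    then have "(\<lambda>n. C * t ^ n * norm x) \<longlonglongrightarrow> C * 0 * norm x"
      by (intro tendsto_mult tendsto_const)
    then show "(\<lambda>n. C * t ^ n * norm x) \<longlonglongrightarrow> 0" by simp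
  qed
  then show ?thesis by (simp add: FF_def)
qed

lemma EmGG: "x \<in> Em \<Longrightarrow> x \<in> GG"
proof -
  assume x: "x \<in> Em"
  obtain C t where Ct: "C > 0" "0 < t" "t < 1"
    "\<And>x n. x \<in> Em \<Longrightarrow> norm ((inv T ^^ n) x) \<le> C * t ^ n * norm x" using contrM by blast
  have "(\<lambda>j. (inv T ^^ j) x) \<longlonglongrightarrow> 0"
  proof (rule Lim_null_comparison)
    show "\<forall>\<^sub>F n in sequentially. norm ((inv T ^^ n) x) \<le> C * t ^ n * norm x" using Ct x by simp
    have "(\<lambda>n. t ^ n) \<longlonglongrightarrow> 0" using Ct by (intro LIMSEQ_realpow_zero) simp_all
    then have "(\<lambda>n. C * t ^ n * norm x) \<longlonglongrightarrow> C * 0 * norm x"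
      by (intro tendsto_mult tendsto_const)
    then show "(\<lambda>n. C * t ^ n * norm x) \<longlonglongrightarrow> 0" by simp
  qed
  then show ?thesis by (simp add: GG_def)
qed

lemma FF_T: "x \<in> FF \<Longrightarrow> T x \<in> FF"
proof -
  assume "x \<in> FF"
  then have h: "(\<lambda>j. (T ^^ j) x) \<longlonglongrightarrow> 0" unfolding FF_def by simp
  have eq: "\<And>n. (T ^^ Suc n) x = (T ^^ n) (T x)" by (simp add: funpow_swap1)
  from LIMSEQ_Suc[OF h] have "(\<lambda>n. (T ^^ n) (T x)) \<longlonglongrightarrow> 0" by (simp only: eq)
  then show "T x \<in> FF" unfolding FF_def by simp
qed

lemma FF_I: "x \<in> FF \<Longrightarrow> inv T x \<in> FF"
proof -
  assume "x \<in> FF"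
  then have h: "(\<lambda>j. (T ^^ j) x) \<longlonglongrightarrow> 0" unfolding FF_def by simp
  have eq: "\<And>n. (T ^^ Suc n) (inv T x) = (T ^^ n) x" by (simp add: funpow_swap1)
  have "(\<lambda>n. (T ^^ Suc n) (inv T x)) \<longlonglongrightarrow> 0" by (simp only: eq h)
  then have "(\<lambda>n. (T ^^ n) (inv T x)) \<longlonglongrightarrow> 0" using filterlim_sequentially_Suc[where f="\<lambda>n. (T ^^ n) (inv T x)"] by blast
  then show "inv T x \<in> FF" unfolding FF_def by simp
qed

lemma GG_I: "x \<in> GG \<Longrightarrow> inv T x \<in> GG"
proof -
  assume "x \<in> GG"
  then have h: "(\<lambda>j. (inv T ^^ j) x) \<longlonglongrightarrow> 0" unfolding GG_def by simp
  have eq: "\<And>n. (inv T ^^ Suc n) x = (inv T ^^ n) (inv T x)" by (simp add: funpow_swap1)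
  from LIMSEQ_Suc[OF h] have "(\<lambda>n. (inv T ^^ n) (inv T x)) \<longlonglongrightarrow> 0" by (simp only: eq)
  then show "inv T x \<in> GG" unfolding GG_def by simp
qed

lemma GG_T: "x \<in> GG \<Longrightarrow> T x \<in> GG"
proof -
  assume "x \<in> GG"
  then have h: "(\<lambda>j. (inv T ^^ j) x) \<longlonglongrightarrow> 0" unfolding GG_def by simp
  have eq: "\<And>n. (inv T ^^ Suc n) (T x) = (inv T ^^ n) x" by (simp add: funpow_swap1)
  have "(\<lambda>n. (inv T ^^ Suc n) (T x)) \<longlonglongrightarrow> 0" by (simp only: eq h)
  then have "(\<lambda>n. (inv T ^^ n) (T x)) \<longlonglongrightarrow> 0" using filterlim_sequentially_Suc[where f="\<lambda>n. (inv T ^^ n) (T x)"] by blast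
  then show "T x \<in> GG" unfolding GG_def by simp
qed

lemma zpow_FG:
  assumes "x \<in> FF \<inter> GG" shows "zpow T n x \<in> FF \<inter> GG"
proof -
  have a: "(T ^^ k) x \<in> FF \<inter> GG" for k
    by (induction k) (use assms FF_T GG_T in auto)
  have b: "(inv T ^^ k) x \<in> FF \<inter> GG" for k
    by (induction k) (use assms FF_I GG_I in auto)
  show ?thesis using a b by (simp add: zpow_def)
qed

lemma E0FG: "e \<in> E0 \<Longrightarrow> e \<in> FF \<inter> GG"
proof -
  assume e: "e \<in> E0"
  then have "T e \<in> FF" using E0_iff EpFF by blast
  then have "inv T (T e) \<in> FF" by (rule FF_I)
  then show ?thesis using e E0_iff EmGG by auto
qed

lemma S_FG: "S \<subseteq> FF \<inter> GG"
  unfolding S_def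
  by (rule span_minimal) (use zpow_FG E0FG subFF subGG subspace_inter in auto)

lemma FG_bounded: "x \<in> FF \<inter> GG \<Longrightarrow> x \<in> bounded_set T"
proof -
  assume x: "x \<in> FF \<inter> GG"
  have "Bseq (\<lambda>j. (T ^^ j) x)" using x unfolding FF_def by (blast intro: convergent_imp_Bseq convergentI)
  then obtain K1 where K1: "K1 > 0" "\<And>n. norm ((T ^^ n) x) \<le> K1" unfolding Bseq_def by blast
  have "Bseq (\<lambda>j. (inv T ^^ j) x)" using x unfolding GG_def by (blast intro: convergent_imp_Bseq convergentI)
  then obtain K2 where K2: "K2 > 0" "\<And>n. norm ((inv T ^^ n) x) \<le> K2" unfolding Bseq_def by blast
  have "strict_mono Suc" by (simp add: strict_mono_def)
  moreover have "norm ((T ^^ Suc n) x) < K1 + K2 \<and> norm ((inv T ^^ Suc n) x) < K1 + K2" for n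
    using K1(2)[of "Suc n"] K2(2)[of "Suc n"] K1(1) K2(1) by linarith
  ultimately show ?thesis unfolding bounded_set_def using K1(1) K2(1)
    by (intro CollectI exI[of _ "K1 + K2"] conjI exI[of _ Suc]) auto
qed

lemma S_bounded: "S \<subseteq> bounded_set T"
  using S_FG FG_bounded by blast

end


context shyp begin

lemma small_eventually:
  fixes t c e :: real
  assumes "0 < t" "t < 1" "e > 0"
  obtains n where "c * t ^ n < e"
proof -
  have "(\<lambda>n. t ^ n) \<longlonglongrightarrow> 0" using assms by (intro LIMSEQ_realpow_zero) simp_all
  then have "(\<lambda>n. c * t ^ n) \<longlonglongrightarrow> c * 0" by (intro tendsto_mult tendsto_const)
  then have "eventually (\<lambda>n. c * t ^ n < e) sequentially"
    using assms(3) by (intro order_tendstoD(2)) simp_all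
  then obtain N where "\<forall>n\<ge>N. c * t ^ n < e" unfolding eventually_sequentially by blast
  then show ?thesis using that by blast
qed

lemma mono3:
  fixes C t t' a b :: real
  assumes "C > 0" "0 \<le> t" "t \<le> t'" "0 \<le> a" "a \<le> b"
  shows "C * t * a \<le> C * t' * b"
proof -
  have "t * a \<le> t' * b" using assms by (meson mult_mono order_trans)
  then show ?thesis using assms(1) by (simp add: mult.assoc)
qed

lemma bounded_closure: "x \<in> bounded_set T \<Longrightarrow> x \<in> closure S"
proof -
  assume "x \<in> bounded_set T"
  then obtain K and k m :: "nat \<Rightarrow> nat" where K: "K > 0" "strict_mono k" "strict_mono m"
    "\<And>n. norm ((T ^^ k n) x) < K" "\<And>n. norm ((inv T ^^ m n) x) < K"
    unfolding bounded_set_def by blast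
  obtain C t where Ct: "C > 0" "0 < t" "t < 1"
    "\<And>x n. x \<in> Ep \<Longrightarrow> norm ((T ^^ n) x) \<le> C * t ^ n * norm x" using contrP by blast
  obtain C' t' where Ct': "C' > 0" "0 < t'" "t' < 1"
    "\<And>x n. x \<in> Em \<Longrightarrow> norm ((inv T ^^ n) x) \<le> C' * t' ^ n * norm x" using contrM by blast
  obtain M where M: "M > 0" "\<And>y. \<exists>a\<in>Em. y - a \<in> Ep \<and> norm a \<le> M * norm y"
    using proj_bounded[OF sEm sEp cEm cEp dec] by blast
  obtain u where u: "u \<in> Em" "x - u \<in> Ep" using dec by blast
  define v where "v = x - u"
  have v: "v \<in> Ep" using u v_def by simp
  have xuv: "x = u + v" using v_def by simp
  have uS: "u \<in> closure S" unfolding closure_approachable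
  proof (intro allI impI)
    fix e :: real assume e: "e > 0"
    define K1 where "K1 = K + C * norm v"
    obtain n where n: "C' * (M * K1) * t' ^ n < e" using small_eventually[OF Ct'(2,3) e] by blast
    define j where "j = k n"
    have nj: "n \<le> j" unfolding j_def using K(2) by (rule seq_suble)
    define y where "y = (T ^^ j) u"
    have "y = (T ^^ j) x - (T ^^ j) v" unfolding y_def using linear_diff[OF linTk] xuv
      by (metis add_diff_cancel_right')
    then have "norm y \<le> norm ((T ^^ j) x) + norm ((T ^^ j) v)" by (simp add: norm_triangle_ineq4)
    moreover have "norm ((T ^^ j) v) \<le> C * norm v"
    proof -
      have "norm ((T ^^ j) v) \<le> C * t ^ j * norm v" using Ct(4) v by blast
      also have "\<dots> \<le> C * 1 * norm v" using Ct by (intro mono3) (simp_all add: power_le_one)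
      finally show ?thesis by simp
    qed
    moreover have "norm ((T ^^ j) x) < K" using K(4) j_def by simp
    ultimately have ny: "norm y \<le> K1" unfolding K1_def by linarith
    obtain a where a: "a \<in> Em" "y - a \<in> Ep" "norm a \<le> M * norm y" using M(2) by blast
    define s where "s = u - (inv T ^^ j) a"
    have sEm': "s \<in> Em" unfolding s_def using u IkEm[OF a(1)] sEm by (simp add: subspace_diff)
    have "(T ^^ j) s = y - a" unfolding s_def y_def using linear_diff[OF linTk] funpow_TI by simp
    then have sS: "s \<in> S" using L2[OF sEm', of j] a(2) by simp
    have "dist s u = norm ((inv T ^^ j) a)" unfolding s_def by (simp add: dist_norm)
    also have "\<dots> \<le> C' * t' ^ j * norm a" using Ct'(4) a(1) by blast
    also have "\<dots> \<le> C' * t' ^ n * (M * K1)"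
    proof (rule mono3)
      show "t' ^ j \<le> t' ^ n" using Ct' nj by (intro power_decreasing) simp_all
      show "norm a \<le> M * K1" using a(3) ny M(1) by (meson mult_left_mono less_imp_le order_trans)
    qed (use Ct' in simp_all)
    also have "\<dots> < e" using n by (simp add: mult_ac)
    finally show "\<exists>s\<in>S. dist s u < e" using sS by blast
  qed
  have vS: "v \<in> closure S" unfolding closure_approachable
  proof (intro allI impI)
    fix e :: real assume e: "e > 0"
    define K2 where "K2 = K + C' * norm u"
    obtain n where n: "C * ((1 + M) * K2) * t ^ n < e" using small_eventually[OF Ct(2,3) e] by blast
    define j where "j = m n"
    have nj: "n \<le> j" unfolding j_def using K(3) by (rule seq_suble)
    define y where "y = (inv T ^^ j) v"
    have "y = (inv T ^^ j) x - (inv T ^^ j) u" unfolding y_def using linear_diff[OF linIk] xuv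
      by (metis add_diff_cancel_left')
    then have "norm y \<le> norm ((inv T ^^ j) x) + norm ((inv T ^^ j) u)" by (simp add: norm_triangle_ineq4)
    moreover have "norm ((inv T ^^ j) u) \<le> C' * norm u"
    proof -
      have "norm ((inv T ^^ j) u) \<le> C' * t' ^ j * norm u" using Ct'(4) u by blast
      also have "\<dots> \<le> C' * 1 * norm u" using Ct' by (intro mono3) (simp_all add: power_le_one)
      finally show ?thesis by simp
    qed
    moreover have "norm ((inv T ^^ j) x) < K" using K(5) j_def by simp
    ultimately have ny: "norm y \<le> K2" unfolding K2_def by linarith
    obtain a where a: "a \<in> Em" "y - a \<in> Ep" "norm a \<le> M * norm y" using M(2) by blast
    define b where "b = y - a"
    have nb: "norm b \<le> (1 + M) * K2"
    proof -
      have "norm b \<le> norm y + norm a" unfolding b_def by (rule norm_triangle_ineq4)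
      also have "\<dots> \<le> K2 + M * K2" using a(3) ny M(1) by (meson add_mono mult_left_mono less_imp_le order_trans)
      finally show ?thesis by (simp add: algebra_simps)
    qed
    define s where "s = (T ^^ j) a"
    have Tja: "(T ^^ j) a = v - (T ^^ j) b"
    proof -
      have "(T ^^ j) y = v" unfolding y_def by (rule funpow_TI)
      moreover have "a = y - b" unfolding b_def by simp
      ultimately show ?thesis using linear_diff[OF linTk] by simp
    qed
    have "(T ^^ j) a \<in> Ep" unfolding Tja using v TkEp[OF a(2)[folded b_def]] sEp by (simp add: subspace_diff)
    then have "a \<in> S" using L2[OF a(1)] by simp
    then have sS: "s \<in> S" unfolding s_def by (rule TkS)
    have "dist s v = norm ((T ^^ j) b)" unfolding s_def Tja by (simp add: dist_norm)
    also have "\<dots> \<le> C * t ^ j * norm b" using Ct(4) a(2) b_def by blast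
    also have "\<dots> \<le> C * t ^ n * ((1 + M) * K2)"
    proof (rule mono3)
      show "t ^ j \<le> t ^ n" using Ct nj by (intro power_decreasing) simp_all
      show "norm b \<le> (1 + M) * K2" by (rule nb)
    qed (use Ct in simp_all)
    also have "\<dots> < e" using n by (simp add: mult_ac)
    finally show "\<exists>s\<in>S. dist s v < e" using sS by blast
  qed
  show "x \<in> closure S" using xuv uS vS subspace_closure_lemma[OF subS] by (simp add: subspace_add)
qed

end


context shyp begin

lemma inf_dim: "\<not> (\<exists>A. finite A \<and> closure S \<subseteq> span A)"
proof
  assume "\<exists>A. finite A \<and> closure S \<subseteq> span A"
  then obtain A where A: "finite A" "closure S \<subseteq> span A" by blast
  have "0 \<in> E0" using E0_iff sEm sEp linear_0[OF linT] by (simp add: subspace_0)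
  then obtain e where e: "e \<in> E0" "e \<noteq> 0" using E0nz unfolding E0_def[symmetric] by blast
  have eEm: "e \<in> Em" and Te: "T e \<in> Ep" using e E0_iff by auto
  have eEp: "e \<notin> Ep" using e(2) eEm EmEp0 by blast
  define V where "V = rec_nat {} (\<lambda>_ X. insert e (T ` X))"
  have V0: "V 0 = {}" and VS: "\<And>N. V (Suc N) = insert e (T ` V N)" by (simp_all add: V_def)
  have injT: "inj_on T X" for X using bij_is_inj[OF bijT] inj_on_subset by blast
  have V: "independent (V N) \<and> finite (V N) \<and> card (V N) = N \<and> V N \<subseteq> range (\<lambda>i. (T ^^ i) e)" for N
  proof (induction N)
    case 0 then show ?case by (simp add: V0 independent_empty)
  next
    case (Suc N)
    let ?X = "V N"
    have TX: "T ` ?X \<subseteq> Ep"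
    proof
      fix z assume "z \<in> T ` ?X"
      then obtain i where "z = T ((T ^^ i) e)" using Suc.IH by blast
      then have "z = (T ^^ i) (T e)" by (simp add: funpow_swap1)
      then show "z \<in> Ep" using TkEp[OF Te] by simp
    qed
    have spX: "span (T ` ?X) \<subseteq> Ep" by (rule span_minimal[OF TX sEp])
    have enot: "e \<notin> span (T ` ?X)" using spX eEp by blast
    have indTX: "independent (T ` ?X)"
      using linear_independent_injective_image[OF linT] Suc.IH injT by blast
    have ind: "independent (V (Suc N))" unfolding VS by (rule independent_insertI[OF enot indTX])
    have fin: "finite (V (Suc N))" unfolding VS using Suc.IH by simp
    have "e \<notin> T ` ?X" using enot span_base by blast
    then have crd: "card (V (Suc N)) = Suc N" unfolding VS using Suc.IH
      by (simp add: card_image injT)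
    have rng: "V (Suc N) \<subseteq> range (\<lambda>i. (T ^^ i) e)"
    proof
      fix z assume "z \<in> V (Suc N)"
      then have "z = e \<or> z \<in> T ` ?X" unfolding VS by blast
      then show "z \<in> range (\<lambda>i. (T ^^ i) e)"
      proof
        assume "z = e" then show ?thesis by (intro range_eqI[of _ _ 0]) simp
      next
        assume "z \<in> T ` ?X"
        then obtain i where "z = T ((T ^^ i) e)" using Suc.IH by blast
        then show ?thesis by (intro range_eqI[of _ _ "Suc i"]) simp
      qed
    qed
    show ?case using ind fin crd rng by blast
  qed
  let ?W = "V (Suc (card A))"
  have "?W \<subseteq> S"
  proof
    fix z assume "z \<in> ?W"
    then obtain i where "z = (T ^^ i) e" using V by blast
    then have "z = zpow T (int i) e" by (simp add: zpow_nat)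
    then show "z \<in> S" using zpowS[OF e(1)] by simp
  qed
  then have "?W \<subseteq> span A" using A(2) closure_subset by blast
  then have "card ?W \<le> card A" using independent_span_bound[OF A(1)] V by blast
  then show False using V by simp
qed

end

theorem theorem3:
  fixes T :: "'a::banach \<Rightarrow> 'a" and Em Ep :: "'a set"
  assumes "T \<in> L_aut"
    and "shifted_hyperbolic_split T Em Ep"
  shows "subspace (closure (bounded_set T)) \<and> closed (closure (bounded_set T))
    \<and> \<not> (\<exists>A. finite A \<and> closure (bounded_set T) \<subseteq> span A)
    \<and> closure (bounded_set T) = shifted_subspace T Em Ep"
proof -
  interpret shyp T Em Ep using assms by unfold_locales
  have "closure (bounded_set T) \<subseteq> closure S"
    using bounded_closure closure_minimal[of "bounded_set T" "closure S"] by blast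
  moreover have "closure S \<subseteq> closure (bounded_set T)" using S_bounded by (rule closure_mono)
  ultimately have eq: "closure (bounded_set T) = closure S" by blast
  show ?thesis using eq shifted_eq subspace_closure_lemma[OF subS] inf_dim by simp
qed


end
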